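(* Suppose Assumptions (A1), (A2), (A3) hold and $a<1/U_L$. Let $\Gamma\ge0$, $\epsilon\in(0,1]$, and $\zeta_1(\epsilon):=\ln\frac{3(\sigma_L+\mathcal C_\mu)peR}{\epsilon}$. Suppose $\hat\beta$, with $\|\hat\beta\|_\infty\le R$, satisfies S$^3$ONC$(\mathbf Z_1^n)$ almost surely and $\mathcal L_{n,\lambda}(\hat\beta,\mathbf Z_1^n)\le\mathcal L_{n,\lambda}(\beta^*_{\hat\varepsilon},\mathbf Z_1^n)+\Gamma$ with probability one. Let $\tilde p_u>s$ be an integer such that, for every integer $\hat p$ with $\tilde p_u\le\hat p\le p$, $$(\hat p-s)P_\lambda(a\lambda)>\frac{4\sigma}{cn}\zeta_1(\epsilon)\hat p+\frac{2\sigma}{\sqrt n}\sqrt{\frac{2\hat p}{c}\zeta_1(\epsilon)}+\Gamma+2\epsilon+\hat\varepsilon.$$ Then, for some constant $\tilde c>0$, $$\mathbb P\big[\|\hat\beta\|_0\le\tilde p_u-1\big]\ge1-2p\,e^{-\tilde cn}-4\exp(-\tilde p_u\zeta_1(\epsilon)).$$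
   Context: Standing setup. Let $Z_1,\dots,Z_n$ be i.i.d. random samples with support $\mathcal W\subseteq\mathbb R^q$, and write $\mathbf Z_1^n=(Z_1,\dots,Z_n)$. Let $L:\mathbb R^p\times\mathcal W\to\mathbb R$ ($p>2$) be measurable and deterministic. Define $\mathcal L_n(\beta,\mathbf Z_1^n)=\frac1n\sum_iL(\beta,Z_i)$ and $\mathbb L(\beta)=\mathbb E[\mathcal L_n(\beta,\mathbf Z_1^n)]$. Let $\beta^*\in\arg\min_\beta\mathbb L(\beta)$ with $\|\beta^*\|_\infty\le R$, $R\ge1$. $L(\cdot,z)$ is continuously differentiable for a.e. $z$ with coordinatewise Lipschitz partial derivatives of constant $U_L\ge1$: $$|\partial_{\beta_j}\mathcal L_n(\tilde\beta+\delta e_j,z)-\partial_{\beta_j}\mathcal L_n(\tilde\beta,z)|\le U_L|\delta|.$$ Penalty. $P_\lambda(\theta)=\int_0^\theta\frac{[a\lambda-t]_+}{a}dt$ and $\mathcal L_{n,\lambda}(\beta,\mathbf Z_1^n)=\mathcal L_n(\beta,\mathbf Z_1^n)+\sum_jP_\lambda(|\beta_j|)$. $\|\cdot\|$ is the Euclidean norm and $\|\cdot\|_0$ counts nonzeros. (A1) (A-sparsity). There is $\beta^*_{\hat\varepsilon}$ with $\|\beta^*_{\hat\varepsilon}\|_\infty\le R$, $s:=\|\beta^*_{\hat\varepsilon}\|_0\ge1$ and $\mathbb L(\beta^*_{\hat\varepsilon})-\mathbb L(\beta^* )\le\hat\varepsilon$ ($\hat\varepsilon\ge0$). (A2). For every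 $\beta$, the variables $L(\beta,Z_i)-\mathbb EL(\beta,Z_i)$ are independent, sub-exponential, with $\psi_1$-norm $\le\sigma$ ($\sigma\ge1$). $c\in(0,0.5]$ is the absolute constant with $$\mathbb P(|\sum_ia_i\{L(\beta,Z_i)-\mathbb EL(\beta,Z_i)\}|>\sigma(\|\mathbf a\|\sqrt t+\|\mathbf a\|_\infty t))\le2e^{-ct}.$$ (A3). There is a measurable deterministic $\mathcal C:\mathcal W\to\mathbb R_+$ with $\|\mathcal C(Z_i)-\mathbb E\mathcal C(Z_i)\|_{\psi_1}\le\sigma_L$ ($\sigma_L\ge1$), $\mathbb E|\mathcal C(Z_i)|\le\mathcal C_\mu$ ($\mathcal C_\mu\ge1$), and $|L(\beta_1,z)-L(\beta_2,z)|\le\mathcal C(z)\|\beta_1-\beta_2\|$. S$^3$ONC$(\mathbf Z_1^n)$. It holds at $\hat\beta$ if both of the following hold. (a) There exist $g_j$, with $g_j=P'_\lambda(|\hat\beta_j|)\mathrm{sign}(\hat\beta_j)$ if $\hat\beta_j\ne0$ and $g_j\in[-\lambda,\lambda]$ if $\hat\beta_j=0$, with $\partial_{\beta_j}\mathcal L_n(\hat\beta,\mathbf Z_1^n)+g_j=0$ for all $j$. (b) For every $j$ with $|\hat\beta_j|\in(0,a\lambda)$, $U_L+P''_\lambda(|\hat\beta_j|)\ge0$. *)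

theory Defs
  imports "HOL-Probability.Probability"
begin

section \<open>Vectors of R^p represented as functions nat => real vanishing beyond index p\<close>

definition Rp :: "nat \<Rightarrow> (nat \<Rightarrow> real) set" where
  "Rp p = {\<beta>. \<forall>j\<ge>p. \<beta> j = 0}"

definition enorm :: "nat \<Rightarrow> (nat \<Rightarrow> real) \<Rightarrow> real" where
  "enorm p v = sqrt (\<Sum>j<p. (v j)\<^sup>2)"

definition supnorm :: "nat \<Rightarrow> (nat \<Rightarrow> real) \<Rightarrow> real" where
  "supnorm p v = Max (insert 0 ((\<lambda>j. \<bar>v j\<bar>) ` {..<p}))"

definition nnz :: "nat \<Rightarrow> (nat \<Rightarrow> real) \<Rightarrow> nat" where
  "nnz p v = card {j. j < p \<and> v j \<noteq> 0}"

definition unitv :: "nat \<Rightarrow> nat \<Rightarrow> real" where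
  "unitv j = (\<lambda>k. if k = j then 1 else 0)"

definition grad_at :: "nat \<Rightarrow> ((nat \<Rightarrow> real) \<Rightarrow> real) \<Rightarrow> (nat \<Rightarrow> real) \<Rightarrow> (nat \<Rightarrow> real) \<Rightarrow> bool" where
  "grad_at p f \<beta> g \<longleftrightarrow>
     (\<forall>e>0. \<exists>d>0. \<forall>h\<in>Rp p. enorm p h < d \<longrightarrow>
        \<bar>f (\<lambda>k. \<beta> k + h k) - f \<beta> - (\<Sum>j<p. g j * h j)\<bar> \<le> e * enorm p h)"

definition cont_diff_grad :: "nat \<Rightarrow> ((nat \<Rightarrow> real) \<Rightarrow> real) \<Rightarrow> ((nat \<Rightarrow> real) \<Rightarrow> (nat \<Rightarrow> real)) \<Rightarrow> bool" where
  "cont_diff_grad p f G \<longleftrightarrow>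
     (\<forall>\<beta>\<in>Rp p. G \<beta> \<in> Rp p \<and> grad_at p f \<beta> (G \<beta>)) \<and>
     (\<forall>\<beta>\<in>Rp p. \<forall>e>0. \<exists>d>0. \<forall>\<beta>'\<in>Rp p.
        enorm p (\<lambda>k. \<beta>' k - \<beta> k) < d \<longrightarrow> enorm p (\<lambda>k. G \<beta>' k - G \<beta> k) < e)"

definition smooth_coord_lipschitz :: "nat \<Rightarrow> real \<Rightarrow> ((nat \<Rightarrow> real) \<Rightarrow> real) \<Rightarrow> bool" where
  "smooth_coord_lipschitz p UL f \<longleftrightarrow>
     (\<exists>G. cont_diff_grad p f G \<and>
        (\<forall>\<beta>\<in>Rp p. \<forall>j<p. \<forall>\<delta>::real.
           \<bar>G (\<lambda>k. \<beta> k + \<delta> * unitv j k) j - G \<beta> j\<bar> \<le> UL * \<bar>\<delta>\<bar>))"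

definition Ppen :: "real \<Rightarrow> real \<Rightarrow> real \<Rightarrow> real" where
  "Ppen lam a \<theta> = integral {0..\<theta>} (\<lambda>t. max (a * lam - t) 0 / a)"

definition Ln :: "nat \<Rightarrow> ((nat \<Rightarrow> real) \<Rightarrow> 'z \<Rightarrow> real) \<Rightarrow> (nat \<Rightarrow> 'a \<Rightarrow> 'z) \<Rightarrow> (nat \<Rightarrow> real) \<Rightarrow> 'a \<Rightarrow> real" where
  "Ln n L Z \<beta> \<omega> = (\<Sum>i<n. L \<beta> (Z i \<omega>)) / real n"

definition Lnlam :: "nat \<Rightarrow> nat \<Rightarrow> real \<Rightarrow> real \<Rightarrow> ((nat \<Rightarrow> real) \<Rightarrow> 'z \<Rightarrow> real) \<Rightarrow> (nat \<Rightarrow> 'a \<Rightarrow> 'z) \<Rightarrow> (nat \<Rightarrow> real) \<Rightarrow> 'a \<Rightarrow> real" where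
  "Lnlam p n lam a L Z \<beta> \<omega> = Ln n L Z \<beta> \<omega> + (\<Sum>j<p. Ppen lam a \<bar>\<beta> j\<bar>)"

definition popL :: "'a measure \<Rightarrow> nat \<Rightarrow> ((nat \<Rightarrow> real) \<Rightarrow> 'z \<Rightarrow> real) \<Rightarrow> (nat \<Rightarrow> 'a \<Rightarrow> 'z) \<Rightarrow> (nat \<Rightarrow> real) \<Rightarrow> real" where
  "popL M n L Z \<beta> = integral\<^sup>L M (Ln n L Z \<beta>)"

definition S3ONC :: "nat \<Rightarrow> real \<Rightarrow> real \<Rightarrow> real \<Rightarrow> ((nat \<Rightarrow> real) \<Rightarrow> real) \<Rightarrow> (nat \<Rightarrow> real) \<Rightarrow> bool" where
  "S3ONC p lam a UL f \<beta> \<longleftrightarrow>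
     (\<forall>j<p. \<exists>d g. ((\<lambda>t. f (\<lambda>k. \<beta> k + t * unitv j k)) has_real_derivative d) (at 0) \<and>
        (if \<beta> j \<noteq> 0 then g = deriv (Ppen lam a) \<bar>\<beta> j\<bar> * sgn (\<beta> j) else g \<in> {-lam..lam}) \<and>
        d + g = 0) \<and>
     (\<forall>j<p. \<bar>\<beta> j\<bar> \<in> {0<..<a * lam} \<longrightarrow> UL + deriv (deriv (Ppen lam a)) \<bar>\<beta> j\<bar> \<ge> 0)"

definition psi1_set :: "'a measure \<Rightarrow> ('a \<Rightarrow> real) \<Rightarrow> real set" where
  "psi1_set M X = {t. 0 < t \<and> (\<integral>\<^sup>+\<omega>. ennreal (exp (\<bar>X \<omega>\<bar> / t)) \<partial>M) \<le> 2}"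

definition sub_exponential :: "'a measure \<Rightarrow> ('a \<Rightarrow> real) \<Rightarrow> bool" where
  "sub_exponential M X \<longleftrightarrow> psi1_set M X \<noteq> {}"

definition psi1_norm :: "'a measure \<Rightarrow> ('a \<Rightarrow> real) \<Rightarrow> real" where
  "psi1_norm M X = Inf (psi1_set M X)"

text \<open>c is a (valid) absolute constant in Bernstein's inequality for weighted sums of
  independent centered sub-exponential random variables on M.\<close>
definition bernstein_constant :: "'a measure \<Rightarrow> real \<Rightarrow> bool" where
  "bernstein_constant M c \<longleftrightarrow>
     (\<forall>(X::nat \<Rightarrow> 'a \<Rightarrow> real) (m::nat) (K::real) (w::nat \<Rightarrow> real) (t::real).
        (\<forall>i<m. X i \<in> borel_measurable M \<and> integrable M (X i) \<and> integral\<^sup>L M (X i) = 0 \<and>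
               sub_exponential M (X i) \<and> psi1_norm M (X i) \<le> K) \<and>
        prob_space.indep_vars M (\<lambda>_. borel) X {..<m} \<and> 0 \<le> t \<longrightarrow>
        measure M {\<omega>\<in>space M. \<bar>\<Sum>i<m. w i * X i \<omega>\<bar> >
            K * (sqrt (\<Sum>i<m. (w i)\<^sup>2) * sqrt t + Max (insert 0 ((\<lambda>i. \<bar>w i\<bar>) ` {..<m})) * t)}
          \<le> 2 * exp (- c * t))"

end

theory Submission
  imports Defs
begin


lemma Ppen_small:
  assumes a: "0 < a" and th: "0 \<le> \<theta>" "\<theta> \<le> a * lam"
  shows "Ppen lam a \<theta> = lam * \<theta> - \<theta>\<^sup>2 / (2 * a)"
proof -
  have "((\<lambda>t. max (a * lam - t) 0 / a) has_integral
         ((\<lambda>t. lam * t - t\<^sup>2 / (2 * a)) \<theta> - (\<lambda>t. lam * t - t\<^sup>2 / (2 * a)) 0)) {0..\<theta>}"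
  proof (rule fundamental_theorem_of_calculus)
    show "0 \<le> \<theta>" by fact
    fix x assume x: "x \<in> {0..\<theta>}"
    have "((\<lambda>t. lam * t - t\<^sup>2 / (2 * a)) has_real_derivative (lam - x / a)) (at x within {0..\<theta>})"
      using a by (auto intro!: derivative_eq_intros simp: field_simps)
    moreover have "lam - x / a = max (a * lam - x) 0 / a"
      using a x th by (auto simp: field_simps max_def)
    ultimately show "((\<lambda>t. lam * t - t\<^sup>2 / (2 * a)) has_vector_derivative max (a * lam - x) 0 / a) (at x within {0..\<theta>})"
      by (simp add: has_real_derivative_iff_has_vector_derivative)
  qed
  moreover have "(\<lambda>t. lam * t - t\<^sup>2 / (2 * a)) \<theta> - (\<lambda>t. lam * t - t\<^sup>2 / (2 * a)) 0 = lam * \<theta> - \<theta>\<^sup>2 / (2 * a)" by simp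
  ultimately have "((\<lambda>t. max (a * lam - t) 0 / a) has_integral (lam * \<theta> - \<theta>\<^sup>2 / (2 * a))) {0..\<theta>}" by (simp only:)
  then show ?thesis unfolding Ppen_def by (rule integral_unique)
qed

lemma Ppen_big:
  assumes a: "0 < a" and lam: "0 < lam" and th: "a * lam \<le> \<theta>"
  shows "Ppen lam a \<theta> = a * lam\<^sup>2 / 2"
proof -
  have "((\<lambda>t. lam * t - t\<^sup>2 / (2 * a)) has_real_derivative (lam - x / a)) (at x within {0..a*lam})" for x
      using a by (auto intro!: derivative_eq_intros simp: field_simps)
  have i1: "((\<lambda>t. max (a * lam - t) 0 / a) has_integral (a * lam\<^sup>2 / 2)) {0..a*lam}"
  proof -
    have "((\<lambda>t. max (a * lam - t) 0 / a) has_integral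
         ((\<lambda>t. lam * t - t\<^sup>2 / (2 * a)) (a*lam) - (\<lambda>t. lam * t - t\<^sup>2 / (2 * a)) 0)) {0..a*lam}"
    proof (rule fundamental_theorem_of_calculus)
      show "0 \<le> a * lam" using a lam by simp
      fix x assume x: "x \<in> {0..a*lam}"
      have "((\<lambda>t. lam * t - t\<^sup>2 / (2 * a)) has_real_derivative (lam - x / a)) (at x within {0..a*lam})"
        using a by (auto intro!: derivative_eq_intros simp: field_simps)
      moreover have "lam - x / a = max (a * lam - x) 0 / a"
        using a x by (auto simp: field_simps max_def)
      ultimately show "((\<lambda>t. lam * t - t\<^sup>2 / (2 * a)) has_vector_derivative max (a * lam - x) 0 / a) (at x within {0..a*lam})"
        by (simp add: has_real_derivative_iff_has_vector_derivative)
    qed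
    moreover have "(\<lambda>t. lam * t - t\<^sup>2 / (2 * a)) (a*lam) - (\<lambda>t. lam * t - t\<^sup>2 / (2 * a)) 0 = a * lam\<^sup>2 / 2"
      using a by (simp add: field_simps power2_eq_square)
    ultimately show ?thesis by (simp only:)
  qed
  have i2: "((\<lambda>t. max (a * lam - t) 0 / a) has_integral 0) {a*lam..\<theta>}"
  proof -
    have "((\<lambda>t. 0::real) has_integral 0) {a*lam..\<theta>}" by simp
    moreover have "\<And>t. t \<in> {a*lam..\<theta>} \<Longrightarrow> max (a * lam - t) 0 / a = 0" by (auto simp: max_def)
    ultimately show ?thesis using has_integral_cong by (metis (no_types, lifting))
  qed
  have "((\<lambda>t. max (a * lam - t) 0 / a) has_integral (a * lam\<^sup>2 / 2 + 0)) {0..\<theta>}"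
    using has_integral_combine[OF _ th i1 i2] a lam by (simp only: mult_nonneg_nonneg less_imp_le)
  then show ?thesis unfolding Ppen_def by (simp only: add_0_right integral_unique)
qed

lemma Ppen_0: "0 < a \<Longrightarrow> 0 < lam \<Longrightarrow> Ppen lam a 0 = 0"
  using Ppen_small[of a 0 lam] by simp

lemma Ppen_le:
  assumes a: "0 < a" and lam: "0 < lam" and th: "0 \<le> \<theta>"
  shows "Ppen lam a \<theta> \<le> Ppen lam a (a * lam)"
proof (cases "\<theta> \<le> a * lam")
  case True
  have "lam * \<theta> - \<theta>\<^sup>2 / (2 * a) \<le> a * lam\<^sup>2 / 2"
  proof -
    have "0 \<le> (a * lam - \<theta>)\<^sup>2" by simp
    then have "0 \<le> ((a * lam - \<theta>)\<^sup>2) / (2*a)" using a by simp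
    moreover have "((a * lam - \<theta>)\<^sup>2) / (2*a) = a * lam\<^sup>2 / 2 - (lam * \<theta> - \<theta>\<^sup>2 / (2 * a))"
      using a by (simp add: field_simps power2_eq_square)
    ultimately show ?thesis by linarith
  qed
  then show ?thesis using Ppen_small[OF a th True] Ppen_big[OF a lam order_refl] by simp
next
  case False
  then show ?thesis using Ppen_big[OF a lam order_refl] Ppen_big[OF a lam, of \<theta>] by simp
qed

lemma Ppen_dd:
  assumes a: "0 < a" and lam: "0 < lam" and x: "0 < x" "x < a * lam"
  shows "deriv (deriv (Ppen lam a)) x = - 1 / a"
proof -
  have d1: "deriv (Ppen lam a) y = lam - y / a" if y: "0 < y" "y < a * lam" for y
  proof -
    have ev: "\<forall>\<^sub>F z in nhds y. Ppen lam a z = lam * z - z\<^sup>2 / (2 * a)"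
    proof -
      have "open {0<..<a*lam}" by simp
      moreover have "y \<in> {0<..<a*lam}" using y by simp
      ultimately have "\<forall>\<^sub>F z in nhds y. z \<in> {0<..<a*lam}"
        using eventually_nhds by blast
      then show ?thesis
        by (rule eventually_mono) (use Ppen_small[OF a] in auto)
    qed
    have "deriv (Ppen lam a) y = deriv (\<lambda>z. lam * z - z\<^sup>2 / (2 * a)) y"
      by (rule deriv_cong_ev[OF ev refl])
    also have "\<dots> = lam - y / a"
    proof (rule DERIV_imp_deriv)
      show "((\<lambda>z. lam * z - z\<^sup>2 / (2 * a)) has_field_derivative lam - y / a) (at y)"
        using a by (auto intro!: derivative_eq_intros simp: field_simps)
    qed
    finally show ?thesis .
  qed
  have ev: "\<forall>\<^sub>F z in nhds x. deriv (Ppen lam a) z = lam - z / a"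
  proof -
    have "open {0<..<a*lam}" by simp
    moreover have "x \<in> {0<..<a*lam}" using x by simp
    ultimately have "\<forall>\<^sub>F z in nhds x. z \<in> {0<..<a*lam}"
      using eventually_nhds by blast
    then show ?thesis
      by (rule eventually_mono) (use d1 in auto)
  qed
  have "deriv (deriv (Ppen lam a)) x = deriv (\<lambda>z. lam - z / a) x"
    by (rule deriv_cong_ev[OF ev refl])
  also have "\<dots> = - 1 / a"
    using a by (intro DERIV_imp_deriv) (auto intro!: derivative_eq_intros)
  finally show ?thesis .
qed

lemma S3ONC_large:
  assumes S: "S3ONC p lam a UL f \<beta>" and a: "0 < a" and lam: "0 < lam"
    and aUL: "a < 1 / UL" and UL: "UL \<ge> 1" and j: "j < p" and nz: "\<beta> j \<noteq> 0"
  shows "a * lam \<le> \<bar>\<beta> j\<bar>"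
proof (rule ccontr)
  assume "\<not> a * lam \<le> \<bar>\<beta> j\<bar>"
  then have "\<bar>\<beta> j\<bar> \<in> {0<..<a * lam}" using nz by auto
  then have "UL + deriv (deriv (Ppen lam a)) \<bar>\<beta> j\<bar> \<ge> 0"
    using S j unfolding S3ONC_def by blast
  moreover have "deriv (deriv (Ppen lam a)) \<bar>\<beta> j\<bar> = -1/a"
    using Ppen_dd[OF a lam] \<open>\<bar>\<beta> j\<bar> \<in> {0<..<a * lam}\<close> by auto
  ultimately have "UL \<ge> 1 / a" by simp
  moreover have "a * UL < 1" using aUL UL by (simp add: field_simps)
  ultimately show False using a by (simp add: field_simps)
qed



lemma pow_fact_le_exp:
  fixes x :: real assumes "0 \<le> x"
  shows "x ^ k / fact k \<le> exp x"
proof -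
  obtain t where "exp x = (\<Sum>m<Suc k. x ^ m / fact m) + exp t / fact (Suc k) * x ^ Suc k"
    using Maclaurin_exp_le[of x "Suc k"] by blast
  moreover have "x ^ k / fact k \<le> (\<Sum>m<Suc k. x ^ m / fact m)"
    by (rule member_le_sum) (use assms in auto)
  moreover have "0 \<le> exp t / fact (Suc k) * x ^ Suc k" using assms by simp
  ultimately show ?thesis by linarith
qed

lemma choose_le_pow_fact: "real (p choose k) \<le> real p ^ k / fact k"
proof -
  have "(p choose k) * fact k \<le> p ^ k" by (rule binomial_fact_pow)
  then have "real ((p choose k) * fact k) \<le> real (p ^ k)" by linarith
  then have "real (p choose k) * fact k \<le> real p ^ k" by simp
  then show ?thesis by (simp add: field_simps)
qed

lemma geom_le:
  fixes q :: real assumes q: "0 \<le> q" "q \<le> 1/2"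
  shows "(\<Sum>k\<in>{a..b}. q ^ k) \<le> 2 * q ^ a"
proof (cases "a \<le> b")
  case False then show ?thesis using q by simp
next
  case True
  have pw: "2 * q ^ Suc m \<le> q ^ m" for m
  proof -
    have "(2 * q) * q ^ m \<le> 1 * q ^ m" using q by (intro mult_right_mono) auto
    then show ?thesis by simp
  qed
  have "a \<le> b \<Longrightarrow> (\<Sum>k\<in>{a..b}. q ^ k) \<le> 2 * q ^ a - 2 * q ^ Suc b"
  proof (induction b)
    case 0 then show ?case using q by simp
  next
    case (Suc b)
    show ?case
    proof (cases "a = Suc b")
      case True then show ?thesis using pw[of "Suc b"] by simp
    next
      case False
      with Suc.prems have ab: "a \<le> b" by simp
      have "{a..Suc b} = insert (Suc b) {a..b}" using ab by auto
      then have "(\<Sum>k\<in>{a..Suc b}. q ^ k) = q ^ Suc b + (\<Sum>k\<in>{a..b}. q ^ k)" by simp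
      also have "\<dots> \<le> q ^ Suc b + (2 * q ^ a - 2 * q ^ Suc b)" using Suc.IH ab by simp
      also have "\<dots> \<le> 2 * q ^ a - 2 * q ^ Suc (Suc b)"
      proof -
        have "2 * q ^ Suc (Suc b) \<le> q ^ Suc b" by (rule pw)
        then show ?thesis by simp
      qed
      finally show ?thesis .
    qed
  qed
  moreover have "0 \<le> q ^ Suc b" using q by simp
  ultimately show ?thesis using True by linarith
qed

lemma round_grid:
  fixes v R h :: real
  assumes h: "0 < h" and v: "\<bar>v\<bar> \<le> R"
  shows "\<exists>i\<in>{0..nat \<lceil>2 * R / h\<rceil>}. \<bar>v - (- R + real i * h)\<bar> \<le> h"
proof -
  define i where "i = nat \<lfloor>(v + R) / h\<rfloor>"
  have nn: "0 \<le> (v + R) / h" using v h by auto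
  have fi: "real i = of_int \<lfloor>(v + R) / h\<rfloor>" unfolding i_def using nn by simp
  have le1: "real i \<le> (v + R) / h" using fi by linarith
  have le2: "(v + R) / h < real i + 1" using fi by linarith
  have "(v + R) / h \<le> 2 * R / h" using v h by (simp add: divide_right_mono)
  then have "i \<le> nat \<lceil>2 * R / h\<rceil>" unfolding i_def
    by (meson ceiling_mono floor_le_ceiling nat_mono order.trans)
  moreover have "\<bar>v - (- R + real i * h)\<bar> \<le> h"
  proof -
    have "real i * h \<le> v + R" using le1 h by (simp add: field_simps)
    moreover have "v + R < (real i + 1) * h" using le2 h by (simp add: field_simps)
    ultimately show ?thesis by (simp add: algebra_simps abs_if)
  qed
  ultimately show ?thesis by auto
qed

definition grid :: "real \<Rightarrow> real \<Rightarrow> real set" where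
  "grid R h = (\<lambda>i. - R + real i * h) ` {0..nat \<lceil>2 * R / h\<rceil>}"

definition net :: "nat \<Rightarrow> nat \<Rightarrow> real \<Rightarrow> real \<Rightarrow> (nat \<Rightarrow> real) set" where
  "net p k R h = (\<Union>S\<in>{S. S \<subseteq> {..<p} \<and> card S = k}.
      (\<lambda>f j. if j \<in> S then f j else 0) ` PiE S (\<lambda>_. grid R h))"

lemma net_Rp: "net p k R h \<subseteq> Rp p"
  unfolding net_def Rp_def by auto

lemma finite_grid: "finite (grid R h)" unfolding grid_def by simp

lemma card_grid: "card (grid R h) \<le> nat \<lceil>2 * R / h\<rceil> + 1"
  unfolding grid_def using card_image_le[of "{0..nat \<lceil>2 * R / h\<rceil>}"] by simp

lemma net_finite_card:
  shows "finite (net p k R h)" and "card (net p k R h) \<le> (p choose k) * (nat \<lceil>2 * R / h\<rceil> + 1) ^ k"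
proof -
  let ?SS = "{S. S \<subseteq> {..<p} \<and> card S = k}"
  let ?F = "\<lambda>S. (\<lambda>f j. if j \<in> S then f j else (0::real)) ` PiE S (\<lambda>_. grid R h)"
  have finSS: "finite ?SS" by (rule finite_subset[of _ "Pow {..<p}"]) auto
  have finF: "finite (?F S)" if "S \<in> ?SS" for S
    using that finite_grid finite_subset[of S "{..<p}"] by (intro finite_imageI finite_PiE) auto
  show "finite (net p k R h)" unfolding net_def using finSS finF by blast
  have cF: "card (?F S) \<le> (nat \<lceil>2 * R / h\<rceil> + 1) ^ k" if "S \<in> ?SS" for S
  proof -
    have fS: "finite S" using that by (auto intro: finite_subset)
    have "card (?F S) \<le> card (PiE S (\<lambda>_. grid R h))" by (rule card_image_le) (use fS finite_grid in \<open>auto intro!: finite_PiE\<close>)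
    also have "\<dots> = card (grid R h) ^ card S" using fS by (simp add: card_PiE)
    also have "\<dots> \<le> (nat \<lceil>2 * R / h\<rceil> + 1) ^ k" using that card_grid by (simp add: power_mono)
    finally show ?thesis .
  qed
  have "card (net p k R h) \<le> (\<Sum>S\<in>?SS. card (?F S))" unfolding net_def by (rule card_UN_le[OF finSS])
  also have "\<dots> \<le> (\<Sum>S\<in>?SS. (nat \<lceil>2 * R / h\<rceil> + 1) ^ k)" by (rule sum_mono) (use cF in auto)
  also have "\<dots> = card ?SS * (nat \<lceil>2 * R / h\<rceil> + 1) ^ k" by simp
  also have "card ?SS = p choose k" using n_subsets[of "{..<p}" k] by simp
  finally show "card (net p k R h) \<le> (p choose k) * (nat \<lceil>2 * R / h\<rceil> + 1) ^ k" .
qed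

lemma supnorm_ge: "j < p \<Longrightarrow> \<bar>v j\<bar> \<le> supnorm p v"
  unfolding supnorm_def by (rule Max_ge) auto

lemma net_approx:
  assumes h: "0 < h" and b: "\<beta> \<in> Rp p" and sn: "supnorm p \<beta> \<le> R" and k: "nnz p \<beta> = k"
  shows "\<exists>\<beta>'\<in>net p k R h. enorm p (\<lambda>j. \<beta> j - \<beta>' j) \<le> sqrt (real k) * h"
proof -
  define S where "S = {j. j < p \<and> \<beta> j \<noteq> 0}"
  have cS: "card S = k" using k unfolding S_def nnz_def by simp
  have "\<forall>j\<in>S. \<exists>g\<in>grid R h. \<bar>\<beta> j - g\<bar> \<le> h"
  proof
    fix j assume "j \<in> S"
    then have "\<bar>\<beta> j\<bar> \<le> R" using supnorm_ge[of j p \<beta>] sn unfolding S_def by auto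
    then obtain i where "i\<in>{0..nat \<lceil>2 * R / h\<rceil>}" "\<bar>\<beta> j - (- R + real i * h)\<bar> \<le> h"
      using round_grid[OF h] by blast
    then show "\<exists>g\<in>grid R h. \<bar>\<beta> j - g\<bar> \<le> h" unfolding grid_def by blast
  qed
  then obtain g where g: "\<And>j. j \<in> S \<Longrightarrow> g j \<in> grid R h \<and> \<bar>\<beta> j - g j\<bar> \<le> h" by metis
  define f where "f = restrict g S"
  define \<beta>' where "\<beta>' = (\<lambda>j. if j \<in> S then f j else 0)"
  have "f \<in> PiE S (\<lambda>_. grid R h)" unfolding f_def using g by auto
  moreover have "S \<in> {S. S \<subseteq> {..<p} \<and> card S = k}" using cS unfolding S_def by auto
  ultimately have inn: "\<beta>' \<in> net p k R h" unfolding net_def \<beta>'_def by blast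
  have "(\<Sum>j<p. (\<beta> j - \<beta>' j)\<^sup>2) = (\<Sum>j\<in>S. (\<beta> j - \<beta>' j)\<^sup>2)"
    by (rule sum.mono_neutral_right) (auto simp: S_def \<beta>'_def)
  also have "\<dots> \<le> (\<Sum>j\<in>S. h\<^sup>2)"
  proof (rule sum_mono)
    fix j assume "j \<in> S"
    then have "\<bar>\<beta> j - \<beta>' j\<bar> \<le> h" using g unfolding \<beta>'_def f_def by auto
    then show "(\<beta> j - \<beta>' j)\<^sup>2 \<le> h\<^sup>2" by (metis abs_ge_zero abs_of_nonneg h less_imp_le power2_abs power_mono)
  qed
  also have "\<dots> = real k * h\<^sup>2" using cS by simp
  finally have "enorm p (\<lambda>j. \<beta> j - \<beta>' j) \<le> sqrt (real k * h\<^sup>2)" unfolding enorm_def by simp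
  also have "\<dots> = sqrt (real k) * h" using h by (simp add: real_sqrt_mult)
  finally show ?thesis using inn by blast
qed



lemma bern_avg:
  fixes Z :: "nat \<Rightarrow> 'a \<Rightarrow> 'b::topological_space" and g :: "'b \<Rightarrow> real"
  assumes P: "prob_space M" and bc: "bernstein_constant M c"
    and Zm: "\<forall>i<n. Z i \<in> borel_measurable M"
    and ind: "prob_space.indep_vars M (\<lambda>_. borel) Z {..<n}"
    and g: "g \<in> borel_measurable borel"
    and hyp: "\<forall>i<n. integrable M (\<lambda>\<omega>. g (Z i \<omega>)) \<and>
          sub_exponential M (\<lambda>\<omega>. g (Z i \<omega>) - integral\<^sup>L M (\<lambda>\<omega>'. g (Z i \<omega>'))) \<and>
          psi1_norm M (\<lambda>\<omega>. g (Z i \<omega>) - integral\<^sup>L M (\<lambda>\<omega>'. g (Z i \<omega>'))) \<le> K"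
    and t: "0 \<le> t" and n: "0 < n"
  shows "{\<omega>\<in>space M. \<bar>\<Sum>i<n. (1 / real n) * (g (Z i \<omega>) - integral\<^sup>L M (\<lambda>\<omega>'. g (Z i \<omega>')))\<bar>
            > K * (sqrt (1 / real n) * sqrt t + (1 / real n) * t)} \<in> sets M"
    and "measure M {\<omega>\<in>space M. \<bar>\<Sum>i<n. (1 / real n) * (g (Z i \<omega>) - integral\<^sup>L M (\<lambda>\<omega>'. g (Z i \<omega>')))\<bar>
            > K * (sqrt (1 / real n) * sqrt t + (1 / real n) * t)} \<le> 2 * exp (- c * t)"
proof -
  interpret prob_space M by (rule P)
  define X where "X = (\<lambda>i \<omega>. g (Z i \<omega>) - integral\<^sup>L M (\<lambda>\<omega>'. g (Z i \<omega>')))"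
  define w where "w = (\<lambda>i::nat. 1 / real n)"
  have Xm: "X i \<in> borel_measurable M" if "i < n" for i
  proof -
    have "Z i \<in> borel_measurable M" using Zm that by auto
    then have "(\<lambda>\<omega>. g (Z i \<omega>)) \<in> borel_measurable M" by (rule measurable_compose[OF _ g])
    then show ?thesis unfolding X_def by simp
  qed
  have Xi: "integrable M (X i)" if "i < n" for i
    unfolding X_def using hyp that by auto
  have X0: "integral\<^sup>L M (X i) = 0" if "i < n" for i
    unfolding X_def using hyp that by (simp add: prob_space)
  have indX: "indep_vars (\<lambda>_. borel) X {..<n}"
    unfolding X_def
    by (rule indep_vars_compose2[OF ind, where Y="\<lambda>i z. g z - integral\<^sup>L M (\<lambda>\<omega>'. g (Z i \<omega>'))"])
       (use g in measurable)
  have B: "measure M {\<omega>\<in>space M. \<bar>\<Sum>i<n. w i * X i \<omega>\<bar> >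
            K * (sqrt (\<Sum>i<n. (w i)\<^sup>2) * sqrt t + Max (insert 0 ((\<lambda>i. \<bar>w i\<bar>) ` {..<n})) * t)}
          \<le> 2 * exp (- c * t)"
  proof -
    have "(\<forall>i<n. X i \<in> borel_measurable M \<and> integrable M (X i) \<and> integral\<^sup>L M (X i) = 0 \<and>
               sub_exponential M (X i) \<and> psi1_norm M (X i) \<le> K) \<and>
        indep_vars (\<lambda>_. borel) X {..<n} \<and> 0 \<le> t"
      using Xm Xi X0 hyp indX t by (auto simp: X_def)
    from bc[unfolded bernstein_constant_def, rule_format, OF this] show ?thesis .
  qed
  have s1: "(\<Sum>i<n. (w i)\<^sup>2) = 1 / real n" unfolding w_def using n by (simp add: power2_eq_square)
  have s2: "Max (insert 0 ((\<lambda>i. \<bar>w i\<bar>) ` {..<n})) = 1 / real n"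
  proof -
    have "(\<lambda>i. \<bar>w i\<bar>) ` {..<n} = {1 / real n}" unfolding w_def using n by auto
    then show ?thesis by simp
  qed
  show "measure M {\<omega>\<in>space M. \<bar>\<Sum>i<n. (1 / real n) * (g (Z i \<omega>) - integral\<^sup>L M (\<lambda>\<omega>'. g (Z i \<omega>')))\<bar>
            > K * (sqrt (1 / real n) * sqrt t + (1 / real n) * t)} \<le> 2 * exp (- c * t)"
    using B unfolding s1 s2 unfolding w_def X_def .
  show "{\<omega>\<in>space M. \<bar>\<Sum>i<n. (1 / real n) * (g (Z i \<omega>) - integral\<^sup>L M (\<lambda>\<omega>'. g (Z i \<omega>')))\<bar>
            > K * (sqrt (1 / real n) * sqrt t + (1 / real n) * t)} \<in> sets M"
  proof -
    have "(\<lambda>\<omega>. g (Z i \<omega>)) \<in> borel_measurable M" if "i < n" for i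
      using Zm that by (intro measurable_compose[OF _ g]) auto
    then have "(\<lambda>\<omega>. \<bar>\<Sum>i<n. (1 / real n) * (g (Z i \<omega>) - integral\<^sup>L M (\<lambda>\<omega>'. g (Z i \<omega>')))\<bar>) \<in> borel_measurable M"
      by (intro borel_measurable_abs borel_measurable_sum borel_measurable_times borel_measurable_diff) auto
    then show ?thesis by measurable
  qed
qed

lemma Ln_popL:
  assumes P: "prob_space M" and I: "\<forall>i<n. integrable M (\<lambda>\<omega>. L \<beta> (Z i \<omega>))"
  shows "Ln n L Z \<beta> \<omega> - popL M n L Z \<beta> =
     (\<Sum>i<n. (1 / real n) * (L \<beta> (Z i \<omega>) - integral\<^sup>L M (\<lambda>\<omega>'. L \<beta> (Z i \<omega>'))))"
proof -
  have "popL M n L Z \<beta> = (\<Sum>i<n. integral\<^sup>L M (\<lambda>\<omega>'. L \<beta> (Z i \<omega>'))) / real n"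
    unfolding popL_def Ln_def using I by (simp add: integral_sum)
  then show ?thesis unfolding Ln_def
    by (simp add: sum_distrib_left sum_subtractf right_diff_distrib sum_divide_distrib diff_divide_distrib)
qed



lemma card_pts:
  fixes x h R :: real
  assumes k: "2 \<le> k" and x: "2 \<le> x" and p: "0 < p"
    and N: "real (nat \<lceil>2 * R / h\<rceil>) \<le> 2 * x * sqrt (real k) + 1"
  shows "real (card (insert b (net p k R h))) \<le> (3 * exp 1 * real p * x) ^ k / 2"
proof -
  define Q where "Q = 3 * exp 1 * real p * x"
  have e1: "exp (1::real) \<ge> 2" using exp_ge_add_one_self[of 1] by simp
  have Q18: "Q \<ge> 12"
  proof -
    have "3 * 2 * 1 * 2 \<le> 3 * exp 1 * real p * x"
      using e1 x p by (intro mult_mono) auto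
    then show ?thesis unfolding Q_def by simp
  qed
  have sk: "sqrt (real k) \<ge> 1" using k by simp
  have kk: "sqrt (real k) \<le> real k - 1/2"
  proof -
    have k2: "2 * real k \<le> real k * real k" using k by (intro mult_right_mono) auto
    have "real k \<le> (real k - 1/2)\<^sup>2" using k2 by (simp add: power2_eq_square algebra_simps)
    then have "sqrt (real k) \<le> sqrt ((real k - 1/2)\<^sup>2)" by (rule real_sqrt_le_mono)
    also have "\<dots> = real k - 1/2" using k by simp
    finally show ?thesis .
  qed
  have G: "real (nat \<lceil>2 * R / h\<rceil> + 1) \<le> 2 * x * real k"
  proof -
    have "2 * x * sqrt (real k) + 2 \<le> 2 * x * real k"
    proof -
      have "2 * x * (real k - sqrt (real k)) \<ge> 2 * 2 * (1/2)"
        using kk x by (intro mult_mono) auto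
      then show ?thesis by (simp add: algebra_simps)
    qed
    then show ?thesis using N by simp
  qed
  have "real (card (insert b (net p k R h))) \<le> real (card (net p k R h)) + 1"
    using card_insert_le_m1 net_finite_card(1)[of p k R h] by (simp add: card_insert_if)
  also have "real (card (net p k R h)) \<le> real (p choose k) * real (nat \<lceil>2 * R / h\<rceil> + 1) ^ k"
    using net_finite_card(2)[of p k R h] by (metis of_nat_le_iff of_nat_mult of_nat_power)
  also have "\<dots> \<le> (real p ^ k / fact k) * (2 * x * real k) ^ k"
    using choose_le_pow_fact[of p k] G by (intro mult_mono power_mono) auto
  also have "\<dots> = (2 * x * real p) ^ k * (real k ^ k / fact k)"
    by (simp add: power_mult_distrib divide_inverse mult_ac)
  also have "\<dots> \<le> (2 * x * real p) ^ k * exp (real k)"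
    using pow_fact_le_exp[of "real k" k] x by (intro mult_left_mono) auto
  also have "exp (real k) = exp 1 ^ k" by (metis exp_of_nat_mult mult.right_neutral)
  also have "(2 * x * real p) ^ k * exp 1 ^ k = (2 * x * real p * exp 1) ^ k"
    by (simp only: power_mult_distrib)
  also have "2 * x * real p * exp 1 = (2/3) * Q" unfolding Q_def by simp
  also have "((2/3) * Q) ^ k = (2/3) ^ k * Q ^ k" by (simp only: power_mult_distrib)
  finally have A: "real (card (insert b (net p k R h))) \<le> (2/3) ^ k * Q ^ k + 1" by simp
  have "(2/3::real) ^ k \<le> (2/3) ^ 2" using k by (intro power_decreasing) auto
  then have B: "(2/3) ^ k * Q ^ k \<le> 4/9 * Q ^ k" using Q18 by (intro mult_right_mono) (auto simp: power2_eq_square)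
  have "Q ^ k \<ge> Q ^ 2" using Q18 k by (intro power_increasing) auto
  moreover have "Q ^ 2 \<ge> 12 * 12" using Q18 unfolding power2_eq_square by (intro mult_mono) auto
  ultimately have "Q ^ k \<ge> 144" by simp
  then have "4/9 * Q ^ k + 1 \<le> Q ^ k / 2" by simp
  with A B show ?thesis unfolding Q_def by linarith
qed



lemma core:
  fixes M :: "'a measure" and Z :: "nat \<Rightarrow> 'a \<Rightarrow> real^'q" and W :: "(real^'q) set"
    and L :: "(nat \<Rightarrow> real) \<Rightarrow> real^'q \<Rightarrow> real" and Cf :: "real^'q \<Rightarrow> real"
    and \<beta>hat :: "'a \<Rightarrow> nat \<Rightarrow> real"
  assumes c_pos: "0 < c"
  and P: "prob_space M" and bc: "bernstein_constant M c"
  and Zm: "\<forall>i<n. Z i \<in> borel_measurable M"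
  and ind: "prob_space.indep_vars M (\<lambda>_. borel) Z {..<n}"
  and ZW: "\<forall>i<n. AE \<omega> in M. Z i \<omega> \<in> W"
  and p2: "2 < p"
  and Lm: "\<forall>\<beta>\<in>Rp p. L \<beta> \<in> borel_measurable borel"
  and R1: "R \<ge> 1"
  and popmin: "\<forall>\<beta>\<in>Rp p. popL M n L Z \<beta>star \<le> popL M n L Z \<beta>"
  and UL: "UL \<ge> 1" and a: "0 < a" and lam: "0 < lam" and aUL: "a < 1 / UL"
  and beps: "\<beta>eps \<in> Rp p" and s1: "nnz p \<beta>eps \<ge> 1"
  and epsA1: "popL M n L Z \<beta>eps - popL M n L Z \<beta>star \<le> epshat"
  and A2: "\<forall>\<beta>\<in>Rp p. \<forall>i<n. integrable M (\<lambda>\<omega>. L \<beta> (Z i \<omega>)) \<and>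
          sub_exponential M (\<lambda>\<omega>. L \<beta> (Z i \<omega>) - integral\<^sup>L M (\<lambda>\<omega>'. L \<beta> (Z i \<omega>'))) \<and>
          psi1_norm M (\<lambda>\<omega>. L \<beta> (Z i \<omega>) - integral\<^sup>L M (\<lambda>\<omega>'. L \<beta> (Z i \<omega>'))) \<le> \<sigma>"
  and sL1: "\<sigma>L \<ge> 1" and Cmu1: "C\<mu> \<ge> 1" and Cfm: "Cf \<in> borel_measurable borel"
  and Cf0: "\<forall>z\<in>W. 0 \<le> Cf z"
  and A3: "\<forall>i<n. integrable M (\<lambda>\<omega>. Cf (Z i \<omega>)) \<and>
          sub_exponential M (\<lambda>\<omega>. Cf (Z i \<omega>) - integral\<^sup>L M (\<lambda>\<omega>'. Cf (Z i \<omega>'))) \<and>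
          psi1_norm M (\<lambda>\<omega>. Cf (Z i \<omega>) - integral\<^sup>L M (\<lambda>\<omega>'. Cf (Z i \<omega>'))) \<le> \<sigma>L \<and>
          integral\<^sup>L M (\<lambda>\<omega>. \<bar>Cf (Z i \<omega>)\<bar>) \<le> C\<mu>"
  and Lip: "\<forall>z\<in>W. \<forall>\<beta>1\<in>Rp p. \<forall>\<beta>2\<in>Rp p.
          \<bar>L \<beta>1 z - L \<beta>2 z\<bar> \<le> Cf z * enorm p (\<lambda>k. \<beta>1 k - \<beta>2 k)"
  and eps0: "0 < \<epsilon>" and eps1: "\<epsilon> \<le> 1"
  and bh: "\<forall>\<omega>\<in>space M. \<beta>hat \<omega> \<in> Rp p \<and> supnorm p (\<beta>hat \<omega>) \<le> R"
  and bhm: "\<forall>j<p. (\<lambda>\<omega>. \<beta>hat \<omega> j) \<in> borel_measurable M"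
  and S3: "AE \<omega> in M. S3ONC p lam a UL (\<lambda>b. Ln n L Z b \<omega>) (\<beta>hat \<omega>)"
  and Lineq: "AE \<omega> in M. Lnlam p n lam a L Z (\<beta>hat \<omega>) \<omega> \<le> Lnlam p n lam a L Z \<beta>eps \<omega> + \<Gamma>"
  and pu: "pu > nnz p \<beta>eps"
  and cond: "\<forall>ph::nat. pu \<le> ph \<and> ph \<le> p \<longrightarrow>
          (real ph - real (nnz p \<beta>eps)) * Ppen lam a (a * lam) >
            4 * \<sigma> / (c * real n) * ln (3 * (\<sigma>L + C\<mu>) * real p * exp 1 * R / \<epsilon>) * real ph
            + 2 * \<sigma> / sqrt (real n) * sqrt (2 * real ph / c * ln (3 * (\<sigma>L + C\<mu>) * real p * exp 1 * R / \<epsilon>))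
            + \<Gamma> + 2 * \<epsilon> + epshat"
  shows "measure M {\<omega>\<in>space M. real (nnz p (\<beta>hat \<omega>)) \<le> real pu - 1}
        \<ge> 1 - 2 * real p * exp (- (c / 4) * real n) - 4 * exp (- real pu * ln (3 * (\<sigma>L + C\<mu>) * real p * exp 1 * R / \<epsilon>))"
proof -
  interpret prob_space M by (rule P)
  define \<zeta> where "\<zeta> = ln (3 * (\<sigma>L + C\<mu>) * real p * exp 1 * R / \<epsilon>)"
  define x where "x = (\<sigma>L + C\<mu>) * R / \<epsilon>"
  define Q where "Q = 3 * exp 1 * real p * x"
  define s where "s = nnz p \<beta>eps"
  have x2: "x \<ge> 2"
  proof -
    have "R / \<epsilon> \<ge> 1" using R1 eps0 eps1 by (simp add: field_simps)
    then have "(\<sigma>L + C\<mu>) * (R / \<epsilon>) \<ge> 2 * 1" using sL1 Cmu1 by (intro mult_mono) auto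
    then show ?thesis unfolding x_def by simp
  qed
  have Qeq: "3 * (\<sigma>L + C\<mu>) * real p * exp 1 * R / \<epsilon> = Q" unfolding Q_def x_def by simp
  have e1: "exp (1::real) \<ge> 2" using exp_ge_add_one_self[of 1] by simp
  have Q12: "Q \<ge> 12"
  proof -
    have "3 * 2 * 1 * 2 \<le> 3 * exp 1 * real p * x"
      using e1 x2 p2 by (intro mult_mono) auto
    then show ?thesis unfolding Q_def by simp
  qed
  have eZ: "exp \<zeta> = Q" unfolding \<zeta>_def Qeq using Q12 by simp
  have Zpos: "\<zeta> > 0" unfolding \<zeta>_def Qeq using Q12 by simp
  have "measure M {\<omega>\<in>space M. real (nnz p (\<beta>hat \<omega>)) \<le> real pu - 1}
        \<ge> 1 - 2 * real p * exp (- (c / 4) * real n) - 4 * exp (- real pu * \<zeta>)"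
  proof (cases "n = 0")
    case True
    have "1 - 2 * real p * exp (- (c / 4) * real n) - 4 * exp (- real pu * \<zeta>) \<le> 0"
    proof -
      have h1: "(1::real) - 2 * real p \<le> 0" using p2 by simp
      have h2: "0 \<le> 4 * exp (- real pu * \<zeta>)" by simp
      have eq: "exp (- (c / 4) * real n) = 1" using True by simp
      show ?thesis unfolding eq using h1 h2 by linarith
    qed
    then show ?thesis using measure_nonneg[of M] by (meson order_trans)
  next
    case False
    then have n: "0 < n" by simp
    define hk where "hk k = \<epsilon> / ((C\<mu> + \<sigma>L) * sqrt (real k))" for k :: nat
    define tk where "tk k = 2 * real k * \<zeta> / c" for k :: nat
    define Pts where "Pts k = insert \<beta>eps (net p k R (hk k))" for k :: nat
    define dev where "dev k = \<sigma> * (sqrt (1 / real n) * sqrt (tk k) + (1 / real n) * tk k)" for k :: nat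
    define BC where "BC = {\<omega>\<in>space M. \<bar>\<Sum>i<n. (1 / real n) * (Cf (Z i \<omega>) - integral\<^sup>L M (\<lambda>\<omega>'. Cf (Z i \<omega>')))\<bar>
            > \<sigma>L * (sqrt (1 / real n) * sqrt (real n / 4) + (1 / real n) * (real n / 4))}"
    define BL where "BL k \<beta> = {\<omega>\<in>space M. \<bar>\<Sum>i<n. (1 / real n) * (L \<beta> (Z i \<omega>) - integral\<^sup>L M (\<lambda>\<omega>'. L \<beta> (Z i \<omega>')))\<bar>
            > \<sigma> * (sqrt (1 / real n) * sqrt (tk k) + (1 / real n) * tk k)}" for k :: nat and \<beta>
    define B where "B = BC \<union> (\<Union>k\<in>{pu..p}. \<Union>\<beta>\<in>Pts k. BL k \<beta>)"
    define G where "G = {\<omega>\<in>space M. real (nnz p (\<beta>hat \<omega>)) \<le> real pu - 1}"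
    have Pts_Rp: "Pts k \<subseteq> Rp p" for k unfolding Pts_def using beps net_Rp by auto
    have Pts_fin: "finite (Pts k)" for k unfolding Pts_def using net_finite_card(1) by simp
    have tk0: "0 \<le> tk k" for k unfolding tk_def using Zpos c_pos by simp
    have BLb: "BL k \<beta> \<in> sets M \<and> measure M (BL k \<beta>) \<le> 2 * exp (- c * tk k)" if "\<beta> \<in> Rp p" for k \<beta>
    proof -
      have g: "L \<beta> \<in> borel_measurable borel" using Lm that by auto
      have hyp: "\<forall>i<n. integrable M (\<lambda>\<omega>. L \<beta> (Z i \<omega>)) \<and>
          sub_exponential M (\<lambda>\<omega>. L \<beta> (Z i \<omega>) - integral\<^sup>L M (\<lambda>\<omega>'. L \<beta> (Z i \<omega>'))) \<and>
          psi1_norm M (\<lambda>\<omega>. L \<beta> (Z i \<omega>) - integral\<^sup>L M (\<lambda>\<omega>'. L \<beta> (Z i \<omega>'))) \<le> \<sigma>"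
        using A2 that by auto
      show ?thesis unfolding BL_def
        using bern_avg(1)[OF P bc Zm ind g hyp tk0 n] bern_avg(2)[OF P bc Zm ind g hyp tk0 n] by (rule conjI)
    qed
    have BCb: "BC \<in> sets M \<and> measure M BC \<le> 2 * exp (- c * (real n / 4))"
    proof -
      have hyp: "\<forall>i<n. integrable M (\<lambda>\<omega>. Cf (Z i \<omega>)) \<and>
          sub_exponential M (\<lambda>\<omega>. Cf (Z i \<omega>) - integral\<^sup>L M (\<lambda>\<omega>'. Cf (Z i \<omega>'))) \<and>
          psi1_norm M (\<lambda>\<omega>. Cf (Z i \<omega>) - integral\<^sup>L M (\<lambda>\<omega>'. Cf (Z i \<omega>'))) \<le> \<sigma>L"
        using A3 by auto
      have t: "0 \<le> real n / 4" by simp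
      show ?thesis unfolding BC_def
        using bern_avg(1)[OF P bc Zm ind Cfm hyp t n] bern_avg(2)[OF P bc Zm ind Cfm hyp t n] by (rule conjI)
    qed
    have BLU: "(\<Union>\<beta>\<in>Pts k. BL k \<beta>) \<in> sets M" for k
      using BLb Pts_Rp Pts_fin by (intro sets.finite_UN) auto
    have BUU: "(\<Union>k\<in>{pu..p}. \<Union>\<beta>\<in>Pts k. BL k \<beta>) \<in> sets M"
      by (rule sets.finite_UN) (use BLU in auto)
    have Bs: "B \<in> sets M" unfolding B_def using BCb BUU by auto
    have measB: "measure M B \<le> 2 * exp (- (c / 4) * real n) + 2 * exp (- real pu * \<zeta>)"
    proof -
      have pu2: "2 \<le> pu" using pu s1 by simp
      have trm: "(\<Sum>\<beta>\<in>Pts k. measure M (BL k \<beta>)) \<le> exp (- \<zeta>) ^ k" if k: "k \<in> {pu..p}" for k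
      proof -
        have k2: "2 \<le> k" using k pu2 by simp
        have skp: "sqrt (real k) > 0" using k2 by simp
        have hpos: "hk k > 0" unfolding hk_def using eps0 sL1 Cmu1 skp by simp
        have "2 * R / hk k = 2 * x * sqrt (real k)"
          unfolding hk_def x_def using eps0 sL1 Cmu1 skp by (simp add: field_simps)
        moreover have "real (nat \<lceil>y\<rceil>) \<le> y + 1" if "0 \<le> y" for y :: real
          using that by linarith
        moreover have "0 \<le> 2 * x * sqrt (real k)" using x2 by simp
        ultimately have N: "real (nat \<lceil>2 * R / hk k\<rceil>) \<le> 2 * x * sqrt (real k) + 1" by simp
        have cP: "real (card (Pts k)) \<le> Q ^ k / 2"
          unfolding Pts_def Q_def using card_pts[OF k2 x2 _ N, where b=\<beta>eps] p2 by simp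
        have "(\<Sum>\<beta>\<in>Pts k. measure M (BL k \<beta>)) \<le> real (card (Pts k)) * (2 * exp (- c * tk k))"
          by (rule sum_bounded_above) (use BLb Pts_Rp in auto)
        also have "\<dots> \<le> Q ^ k / 2 * (2 * exp (- c * tk k))"
          using cP by (intro mult_right_mono) auto
        also have "\<dots> = exp (real k * \<zeta>) * exp (- (2 * real k * \<zeta>))"
        proof -
          have "c * tk k = 2 * real k * \<zeta>" unfolding tk_def using c_pos by simp
          moreover have "Q ^ k = exp (real k * \<zeta>)" unfolding eZ[symmetric] by (simp only: exp_of_nat_mult)
          ultimately show ?thesis by simp
        qed
        also have "\<dots> = exp (real k * (- \<zeta>))" by (simp add: exp_add[symmetric])
        also have "\<dots> = exp (- \<zeta>) ^ k" by (simp only: exp_of_nat_mult)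
        finally show ?thesis .
      qed
      have "measure M B \<le> measure M BC + measure M (\<Union>k\<in>{pu..p}. \<Union>\<beta>\<in>Pts k. BL k \<beta>)"
        unfolding B_def using BCb BUU by (intro measure_Un_le) auto
      also have "measure M (\<Union>k\<in>{pu..p}. \<Union>\<beta>\<in>Pts k. BL k \<beta>) \<le> (\<Sum>k\<in>{pu..p}. measure M (\<Union>\<beta>\<in>Pts k. BL k \<beta>))"
        using BLU by (intro measure_UNION_le) auto
      also have "\<dots> \<le> (\<Sum>k\<in>{pu..p}. \<Sum>\<beta>\<in>Pts k. measure M (BL k \<beta>))"
        by (intro sum_mono measure_UNION_le) (use BLb Pts_Rp Pts_fin in auto)
      also have "\<dots> \<le> (\<Sum>k\<in>{pu..p}. exp (- \<zeta>) ^ k)"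
        by (intro sum_mono trm)
      also have "\<dots> \<le> 2 * exp (- \<zeta>) ^ pu"
      proof (rule geom_le)
        show "0 \<le> exp (- \<zeta>)" by simp
        have "exp (- \<zeta>) = 1 / Q" using eZ by (simp add: exp_minus field_simps)
        then show "exp (- \<zeta>) \<le> 1/2" using Q12 by simp
      qed
      also have "exp (- \<zeta>) ^ pu = exp (- real pu * \<zeta>)"
      proof -
        have "exp (- \<zeta>) ^ pu = exp (real pu * (- \<zeta>))" by (simp only: exp_of_nat_mult)
        then show ?thesis by simp
      qed
      finally show ?thesis using BCb by (simp add: mult.commute)
    qed
    have Gs: "G \<in> sets M"
    proof -
      have nnzeq: "real (nnz p (\<beta>hat \<omega>)) = (\<Sum>j<p. if \<beta>hat \<omega> j \<noteq> 0 then 1 else 0)" for \<omega>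
      proof -
        have "{j. j < p \<and> \<beta>hat \<omega> j \<noteq> 0} = {j\<in>{..<p}. \<beta>hat \<omega> j \<noteq> 0}" by auto
        then have "real (nnz p (\<beta>hat \<omega>)) = (\<Sum>j\<in>{j\<in>{..<p}. \<beta>hat \<omega> j \<noteq> 0}. 1)"
          unfolding nnz_def by simp
        also have "\<dots> = (\<Sum>j<p. if \<beta>hat \<omega> j \<noteq> 0 then 1 else 0)"
          by (rule sum.inter_filter) simp
        finally show ?thesis .
      qed
      have mj: "(\<lambda>\<omega>. if \<beta>hat \<omega> j \<noteq> 0 then 1 else (0::real)) \<in> borel_measurable M" if "j < p" for j
      proof -
        have [measurable]: "(\<lambda>\<omega>. \<beta>hat \<omega> j) \<in> borel_measurable M" using bhm that by auto
        show ?thesis by measurable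
      qed
      have "(\<lambda>\<omega>. real (nnz p (\<beta>hat \<omega>))) \<in> borel_measurable M"
        unfolding nnzeq by (rule borel_measurable_sum) (use mj in auto)
      then show ?thesis unfolding G_def by measurable
    qed
    have AEW: "AE \<omega> in M. \<forall>i\<in>{..<n}. Z i \<omega> \<in> W"
      by (rule eventually_ball_finite) (use ZW in auto)
    have AEG: "AE \<omega> in M. \<omega> \<in> space M - B \<longrightarrow> \<omega> \<in> G"
      using S3 Lineq AEW
    proof eventually_elim
      case (elim \<omega>)
      show ?case
      proof
        assume \<omega>B: "\<omega> \<in> space M - B"
        then have \<omega>s: "\<omega> \<in> space M" and nB: "\<omega> \<notin> B" by auto
        define b where "b = \<beta>hat \<omega>"
        have bRp: "b \<in> Rp p" and bsn: "supnorm p b \<le> R" using bh \<omega>s unfolding b_def by auto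
        define k where "k = nnz p b"
        have "real k \<le> real pu - 1"
        proof (rule ccontr)
          assume "\<not> real k \<le> real pu - 1"
          then have kpu: "pu \<le> k" by linarith
          have kp: "k \<le> p" unfolding k_def nnz_def
            using card_mono[of "{..<p}" "{j. j < p \<and> b j \<noteq> 0}"] by auto
          have kI: "k \<in> {pu..p}" using kpu kp by simp
          have k2: "2 \<le> k" using kpu pu s1 by simp
          define P0 where "P0 = Ppen lam a (a * lam)"
          have P0eq: "P0 = a * lam\<^sup>2 / 2" unfolding P0_def using Ppen_big[OF a lam order_refl] .
          have S3b: "S3ONC p lam a UL (\<lambda>b. Ln n L Z b \<omega>) b" using elim(1) unfolding b_def .
          have pj: "Ppen lam a \<bar>b j\<bar> = (if b j \<noteq> 0 then P0 else 0)" if "j < p" for j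
          proof (cases "b j = 0")
            case True then show ?thesis using Ppen_0[OF a lam] by simp
          next
            case False
            have "a * lam \<le> \<bar>b j\<bar>" by (rule S3ONC_large[OF S3b a lam aUL UL that False])
            then have "Ppen lam a \<bar>b j\<bar> = a * lam\<^sup>2 / 2" by (rule Ppen_big[OF a lam])
            then show ?thesis using False P0eq by simp
          qed
          have penb: "(\<Sum>j<p. Ppen lam a \<bar>b j\<bar>) = real k * P0"
          proof -
            have "(\<Sum>j<p. Ppen lam a \<bar>b j\<bar>) = (\<Sum>j<p. if b j \<noteq> 0 then P0 else 0)"
              by (rule sum.cong) (auto simp: pj)
            also have "\<dots> = (\<Sum>j\<in>{j\<in>{..<p}. b j \<noteq> 0}. P0)" by (rule sum.inter_filter[symmetric]) simp
            also have "{j\<in>{..<p}. b j \<noteq> 0} = {j. j < p \<and> b j \<noteq> 0}" by auto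
            finally show ?thesis unfolding k_def nnz_def by simp
          qed
          have pe: "Ppen lam a \<bar>\<beta>eps j\<bar> \<le> (if \<beta>eps j \<noteq> 0 then P0 else 0)" for j
          proof (cases "\<beta>eps j = 0")
            case True then show ?thesis using Ppen_0[OF a lam] by simp
          next
            case False then show ?thesis using Ppen_le[OF a lam] unfolding P0_def by simp
          qed
          have penE: "(\<Sum>j<p. Ppen lam a \<bar>\<beta>eps j\<bar>) \<le> real s * P0"
          proof -
            have "(\<Sum>j<p. Ppen lam a \<bar>\<beta>eps j\<bar>) \<le> (\<Sum>j<p. if \<beta>eps j \<noteq> 0 then P0 else 0)"
              by (rule sum_mono) (rule pe)
            also have "\<dots> = (\<Sum>j\<in>{j\<in>{..<p}. \<beta>eps j \<noteq> 0}. P0)" by (rule sum.inter_filter[symmetric]) simp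
            also have "{j\<in>{..<p}. \<beta>eps j \<noteq> 0} = {j. j < p \<and> \<beta>eps j \<noteq> 0}" by auto
            finally show ?thesis unfolding s_def nnz_def by simp
          qed
          have det: "Ln n L Z b \<omega> + real k * P0 \<le> Ln n L Z \<beta>eps \<omega> + real s * P0 + \<Gamma>"
            using elim(2) penb penE unfolding Lnlam_def b_def[symmetric] by linarith
          have "\<omega> \<notin> BC" using nB unfolding B_def by auto
          then have cC: "\<bar>\<Sum>i<n. (1 / real n) * (Cf (Z i \<omega>) - integral\<^sup>L M (\<lambda>\<omega>'. Cf (Z i \<omega>')))\<bar>
              \<le> \<sigma>L * (sqrt (1 / real n) * sqrt (real n / 4) + (1 / real n) * (real n / 4))"
            using \<omega>s unfolding BC_def by auto
          have d34: "sqrt (1 / real n) * sqrt (real n / 4) + (1 / real n) * (real n / 4) = 3/4"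
          proof -
            have "sqrt (1 / real n) * sqrt (real n / 4) = sqrt (1 / real n * (real n / 4))"
              by (rule real_sqrt_mult[symmetric])
            also have "1 / real n * (real n / 4) = 1/4" using n by simp
            also have "sqrt (1/4) = (1/2::real)" by (rule real_sqrt_unique) (auto simp: power2_eq_square)
            finally show ?thesis using n by simp
          qed
          have EC: "(\<Sum>i<n. (1 / real n) * integral\<^sup>L M (\<lambda>\<omega>'. Cf (Z i \<omega>'))) \<le> C\<mu>"
          proof -
            have "(\<Sum>i<n. (1 / real n) * integral\<^sup>L M (\<lambda>\<omega>'. Cf (Z i \<omega>'))) \<le> (\<Sum>i<n. (1 / real n) * C\<mu>)"
            proof (rule sum_mono)
              fix i assume "i \<in> {..<n}"
              then have "integral\<^sup>L M (\<lambda>\<omega>. \<bar>Cf (Z i \<omega>)\<bar>) \<le> C\<mu>" using A3 by auto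
              moreover have "integral\<^sup>L M (\<lambda>\<omega>'. Cf (Z i \<omega>')) \<le> integral\<^sup>L M (\<lambda>\<omega>. \<bar>Cf (Z i \<omega>)\<bar>)"
                using integral_abs_bound[of M "\<lambda>\<omega>'. Cf (Z i \<omega>')"] by linarith
              ultimately show "(1 / real n) * integral\<^sup>L M (\<lambda>\<omega>'. Cf (Z i \<omega>')) \<le> (1 / real n) * C\<mu>"
                by (intro mult_left_mono) auto
            qed
            also have "\<dots> = C\<mu>" using n by simp
            finally show ?thesis .
          qed
          have meanC: "(\<Sum>i<n. (1 / real n) * Cf (Z i \<omega>)) \<le> C\<mu> + \<sigma>L"
          proof -
            have "(\<Sum>i<n. (1 / real n) * Cf (Z i \<omega>)) - (\<Sum>i<n. (1 / real n) * integral\<^sup>L M (\<lambda>\<omega>'. Cf (Z i \<omega>')))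
                = (\<Sum>i<n. (1 / real n) * (Cf (Z i \<omega>) - integral\<^sup>L M (\<lambda>\<omega>'. Cf (Z i \<omega>'))))"
              by (simp add: sum_subtractf right_diff_distrib)
            also have "\<dots> \<le> \<sigma>L * (3/4)" using cC unfolding d34 by (meson abs_ge_self order_trans)
            finally show ?thesis using EC sL1 by linarith
          qed
          have Cnn: "0 \<le> (\<Sum>i<n. (1 / real n) * Cf (Z i \<omega>))"
            using elim(3) Cf0 by (intro sum_nonneg) auto
          have skp: "sqrt (real k) > 0" using k2 by simp
          have hpos: "hk k > 0" unfolding hk_def using eps0 sL1 Cmu1 skp by simp
          obtain b' where b'N: "b' \<in> net p k R (hk k)" and cl: "enorm p (\<lambda>j. b j - b' j) \<le> sqrt (real k) * hk k"
            using net_approx[OF hpos bRp bsn k_def[symmetric]] by blast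
          have skh: "sqrt (real k) * hk k = \<epsilon> / (C\<mu> + \<sigma>L)" unfolding hk_def using skp by simp
          have b'Rp: "b' \<in> Rp p" using net_Rp[of p k R "hk k"] b'N by blast
          define e where "e = enorm p (\<lambda>j. b j - b' j)"
          have e0: "0 \<le> e" unfolding e_def enorm_def by (simp add: sum_nonneg)
          have lip: "\<bar>Ln n L Z b \<omega> - Ln n L Z b' \<omega>\<bar> \<le> \<epsilon>"
          proof -
            have "Ln n L Z b \<omega> - Ln n L Z b' \<omega> = (\<Sum>i<n. (1 / real n) * (L b (Z i \<omega>) - L b' (Z i \<omega>)))"
              unfolding Ln_def sum_distrib_left[symmetric] sum_subtractf by (simp add: diff_divide_distrib)
            then have "\<bar>Ln n L Z b \<omega> - Ln n L Z b' \<omega>\<bar> \<le> (\<Sum>i<n. \<bar>(1 / real n) * (L b (Z i \<omega>) - L b' (Z i \<omega>))\<bar>)"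
              by (simp only: sum_abs)
            also have "\<dots> \<le> (\<Sum>i<n. (1 / real n) * (Cf (Z i \<omega>) * e))"
            proof (rule sum_mono)
              fix i assume "i \<in> {..<n}"
              then have "Z i \<omega> \<in> W" using elim(3) by auto
              then have "\<bar>L b (Z i \<omega>) - L b' (Z i \<omega>)\<bar> \<le> Cf (Z i \<omega>) * e"
                using Lip bRp b'Rp unfolding e_def by blast
              then show "\<bar>(1 / real n) * (L b (Z i \<omega>) - L b' (Z i \<omega>))\<bar> \<le> (1 / real n) * (Cf (Z i \<omega>) * e)"
                by (simp add: abs_mult divide_right_mono)
            qed
            also have "\<dots> = e * (\<Sum>i<n. (1 / real n) * Cf (Z i \<omega>))"
              by (simp add: sum_distrib_left mult_ac)
            also have "\<dots> \<le> (\<epsilon> / (C\<mu> + \<sigma>L)) * (C\<mu> + \<sigma>L)"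
              using cl skh meanC Cnn e0 unfolding e_def[symmetric] by (intro mult_mono) auto
            also have "\<dots> = \<epsilon>" using sL1 Cmu1 by simp
            finally show ?thesis .
          qed
          have conc: "\<bar>Ln n L Z \<beta> \<omega> - popL M n L Z \<beta>\<bar> \<le> dev k" if "\<beta> \<in> Pts k" for \<beta>
          proof -
            have bR: "\<beta> \<in> Rp p" using that Pts_Rp by auto
            have "\<omega> \<notin> BL k \<beta>" using nB kI that unfolding B_def by auto
            then have "\<bar>\<Sum>i<n. (1 / real n) * (L \<beta> (Z i \<omega>) - integral\<^sup>L M (\<lambda>\<omega>'. L \<beta> (Z i \<omega>')))\<bar> \<le> dev k"
              using \<omega>s unfolding BL_def dev_def by auto
            moreover have "\<forall>i<n. integrable M (\<lambda>\<omega>. L \<beta> (Z i \<omega>))" using A2 bR by auto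
            ultimately show ?thesis using Ln_popL[OF P, of n L \<beta> Z \<omega>] by simp
          qed
          have c1: "\<bar>Ln n L Z b' \<omega> - popL M n L Z b'\<bar> \<le> dev k"
            by (rule conc) (use b'N in \<open>simp add: Pts_def\<close>)
          have c2: "\<bar>Ln n L Z \<beta>eps \<omega> - popL M n L Z \<beta>eps\<bar> \<le> dev k"
            by (rule conc) (simp add: Pts_def)
          have pop: "popL M n L Z b' \<ge> popL M n L Z \<beta>eps - epshat" using popmin b'Rp epsA1 by auto
          have comb: "(real k - real s) * P0 \<le> 2 * dev k + \<epsilon> + epshat + \<Gamma>"
            using det lip c1 c2 pop unfolding left_diff_distrib by linarith
          have condk: "(real k - real s) * P0 >
            4 * \<sigma> / (c * real n) * \<zeta> * real k + 2 * \<sigma> / sqrt (real n) * sqrt (2 * real k / c * \<zeta>)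
            + \<Gamma> + 2 * \<epsilon> + epshat"
            using cond kpu kp unfolding \<zeta>_def[symmetric] s_def[symmetric] P0_def[symmetric] by blast
          have rhs: "4 * \<sigma> / (c * real n) * \<zeta> * real k + 2 * \<sigma> / sqrt (real n) * sqrt (2 * real k / c * \<zeta>) = 2 * dev k"
          proof -
            have r1: "sqrt (1 / real n) = 1 / sqrt (real n)" by (simp add: real_sqrt_divide)
            have r2: "2 * real k / c * \<zeta> = 2 * real k * \<zeta> / c" by simp
            have sn: "sqrt (real n) > 0" using n by simp
            show ?thesis unfolding dev_def tk_def r1 r2 using sn c_pos n by (simp add: field_simps)
          qed
          show False using comb condk rhs eps0 by linarith
        qed
        then show "\<omega> \<in> G" unfolding G_def k_def b_def using \<omega>s by simp
      qed
    qed
    have "measure M (space M - B) \<le> measure M G"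
      by (rule finite_measure_mono_AE[OF AEG Gs])
    moreover have "measure M (space M - B) = 1 - measure M B" using prob_compl[OF Bs] by simp
    moreover have "2 * exp (- (c / 4) * real n) \<le> 2 * real p * exp (- (c / 4) * real n)"
      using p2 by simp
    moreover have "2 * exp (- real pu * \<zeta>) \<le> 4 * exp (- real pu * \<zeta>)" by simp
    ultimately show ?thesis using measB unfolding G_def by linarith
  qed
  then show ?thesis unfolding \<zeta>_def .
qed


theorem mainTheorem9:
  fixes c :: real
  assumes c_pos: "0 < c" and c_le: "c \<le> 1/2"
  shows "\<exists>ct>0. \<forall>(M::'a measure) (Z::nat \<Rightarrow> 'a \<Rightarrow> real^'q) (W::(real^'q) set)
            (L::(nat \<Rightarrow> real) \<Rightarrow> real^'q \<Rightarrow> real) (Cf::real^'q \<Rightarrow> real)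
            (n::nat) (p::nat) (\<sigma>::real) (\<sigma>L::real) (C\<mu>::real) (R::real) (UL::real)
            (a::real) (lam::real) (\<beta>star::nat \<Rightarrow> real) (\<beta>eps::nat \<Rightarrow> real) (epshat::real)
            (\<Gamma>::real) (\<epsilon>::real) (\<beta>hat::'a \<Rightarrow> nat \<Rightarrow> real) (pu::nat).
    let s = nnz p \<beta>eps;
        \<zeta>1 = ln (3 * (\<sigma>L + C\<mu>) * real p * exp 1 * R / \<epsilon>)
    in
    ( \<comment> \<open>probability space, i.i.d. samples with support in W\<close>
      prob_space M \<and> bernstein_constant M c \<and>
      (\<forall>i<n. Z i \<in> borel_measurable M) \<and>
      prob_space.indep_vars M (\<lambda>_. borel) Z {..<n} \<and>
      (\<forall>i<n. distr M borel (Z i) = distr M borel (Z 0)) \<and>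
      W \<in> sets borel \<and> (\<forall>i<n. AE \<omega> in M. Z i \<omega> \<in> W) \<and>
      \<comment> \<open>dimension and loss\<close>
      2 < p \<and>
      (\<forall>\<beta>\<in>Rp p. L \<beta> \<in> borel_measurable borel) \<and>
      \<comment> \<open>beta* minimizes the population loss\<close>
      R \<ge> 1 \<and> \<beta>star \<in> Rp p \<and> supnorm p \<beta>star \<le> R \<and>
      (\<forall>\<beta>\<in>Rp p. popL M n L Z \<beta>star \<le> popL M n L Z \<beta>) \<and>
      \<comment> \<open>smoothness\<close>
      UL \<ge> 1 \<and> (\<forall>i<n. AE \<omega> in M. smooth_coord_lipschitz p UL (\<lambda>b. L b (Z i \<omega>))) \<and>
      \<comment> \<open>penalty parameters\<close>
      0 < a \<and> 0 < lam \<and> a < 1 / UL \<and>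
      \<comment> \<open>(A1)\<close>
      \<beta>eps \<in> Rp p \<and> supnorm p \<beta>eps \<le> R \<and> s \<ge> 1 \<and> epshat \<ge> 0 \<and>
      popL M n L Z \<beta>eps - popL M n L Z \<beta>star \<le> epshat \<and>
      \<comment> \<open>(A2)\<close>
      \<sigma> \<ge> 1 \<and>
      (\<forall>\<beta>\<in>Rp p. \<forall>i<n. integrable M (\<lambda>\<omega>. L \<beta> (Z i \<omega>)) \<and>
          sub_exponential M (\<lambda>\<omega>. L \<beta> (Z i \<omega>) - integral\<^sup>L M (\<lambda>\<omega>'. L \<beta> (Z i \<omega>'))) \<and>
          psi1_norm M (\<lambda>\<omega>. L \<beta> (Z i \<omega>) - integral\<^sup>L M (\<lambda>\<omega>'. L \<beta> (Z i \<omega>'))) \<le> \<sigma>) \<and>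
      \<comment> \<open>(A3)\<close>
      \<sigma>L \<ge> 1 \<and> C\<mu> \<ge> 1 \<and> Cf \<in> borel_measurable borel \<and> (\<forall>z\<in>W. 0 \<le> Cf z) \<and>
      (\<forall>i<n. integrable M (\<lambda>\<omega>. Cf (Z i \<omega>)) \<and>
          sub_exponential M (\<lambda>\<omega>. Cf (Z i \<omega>) - integral\<^sup>L M (\<lambda>\<omega>'. Cf (Z i \<omega>'))) \<and>
          psi1_norm M (\<lambda>\<omega>. Cf (Z i \<omega>) - integral\<^sup>L M (\<lambda>\<omega>'. Cf (Z i \<omega>'))) \<le> \<sigma>L \<and>
          integral\<^sup>L M (\<lambda>\<omega>. \<bar>Cf (Z i \<omega>)\<bar>) \<le> C\<mu>) \<and>
      (\<forall>z\<in>W. \<forall>\<beta>1\<in>Rp p. \<forall>\<beta>2\<in>Rp p.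
          \<bar>L \<beta>1 z - L \<beta>2 z\<bar> \<le> Cf z * enorm p (\<lambda>k. \<beta>1 k - \<beta>2 k)) \<and>
      \<comment> \<open>parameters Gamma, epsilon\<close>
      \<Gamma> \<ge> 0 \<and> 0 < \<epsilon> \<and> \<epsilon> \<le> 1 \<and>
      \<comment> \<open>the estimator\<close>
      (\<forall>\<omega>\<in>space M. \<beta>hat \<omega> \<in> Rp p \<and> supnorm p (\<beta>hat \<omega>) \<le> R) \<and>
      (\<forall>j<p. (\<lambda>\<omega>. \<beta>hat \<omega> j) \<in> borel_measurable M) \<and>
      (AE \<omega> in M. S3ONC p lam a UL (\<lambda>b. Ln n L Z b \<omega>) (\<beta>hat \<omega>)) \<and>
      (AE \<omega> in M. Lnlam p n lam a L Z (\<beta>hat \<omega>) \<omega> \<le> Lnlam p n lam a L Z \<beta>eps \<omega> + \<Gamma>) \<and>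
      \<comment> \<open>the integer pu\<close>
      pu > s \<and>
      (\<forall>ph::nat. pu \<le> ph \<and> ph \<le> p \<longrightarrow>
          (real ph - real s) * Ppen lam a (a * lam) >
            4 * \<sigma> / (c * real n) * \<zeta>1 * real ph
            + 2 * \<sigma> / sqrt (real n) * sqrt (2 * real ph / c * \<zeta>1)
            + \<Gamma> + 2 * \<epsilon> + epshat)
    \<longrightarrow>
      measure M {\<omega>\<in>space M. real (nnz p (\<beta>hat \<omega>)) \<le> real pu - 1}
        \<ge> 1 - 2 * real p * exp (- ct * real n) - 4 * exp (- real pu * \<zeta>1))"
    apply (rule exI[of _ "c/4"])
  apply (intro conjI allI)
   apply (simp add: c_pos)
  apply (unfold Let_def)
  apply (intro impI)
  apply (elim conjE)
  subgoal for M Z W L Cf n p \<sigma> \<sigma>L C\<mu> R UL a lam \<beta>star \<beta>eps epshat \<Gamma> \<epsilon> \<beta>hat pu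
    by (rule core[OF c_pos, where Z=Z and W=W and L=L and Cf=Cf and \<beta>star=\<beta>star
          and \<beta>eps=\<beta>eps and UL=UL and a=a and lam=lam and epshat=epshat and \<Gamma>=\<Gamma> and \<sigma>=\<sigma>])
       assumption+
  done

end
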